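(* Let $\alpha_1,\alpha_2,\alpha_3>0$, $\lambda_1,\lambda_2,\lambda_3\ge0$ with $\lambda^+=\lambda_1+\lambda_2+\lambda_3>0$, $\alpha^+=\alpha_1+\alpha_2+\alpha_3$, and $(X'_1,X'_2)\sim\mathrm{NcDir}^2(\alpha_1,\alpha_2,\alpha_3,\lambda_1,\lambda_2,\lambda_3)$. Writing $x=\lambda^+/2$, $\mu_i=\lambda_i/2$, one has $$ \mathbb E(X'_1X'_2)=\frac{\alpha_1\alpha_2}{(\alpha^+)_2}e^{-x}\,{}_1F_1(\alpha^+;\alpha^++2;x)+\frac{1}{\alpha^++2}\Big[\frac{\alpha_1\mu_2+\alpha_2\mu_1}{\alpha^++1}-\frac{\mu_1\mu_2}{\alpha^++1+x}\Big]e^{-x}\,{}_1F_1(\alpha^++1;\alpha^++3;x)+\frac{\mu_1\mu_2}{x(\alpha^++1+x)}\Big[1-e^{-x}\,{}_1F_1(\alpha^++1;\alpha^++3;x)\Big]. $$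
   Context: $(a)_l=\Gamma(a+l)/\Gamma(a)$ is the Pochhammer symbol; ${}_1F_1(a;b;x)=\sum_{i\ge0}\frac{(a)_i}{(b)_i}\frac{x^i}{i!}$ is Kummer's confluent hypergeometric function. $\mathrm{NcDir}^2(\alpha_1,\alpha_2,\alpha_3,\lambda_1,\lambda_2,\lambda_3)$ is the law of $(Y'_1/Y'^+,Y'_2/Y'^+)$ where $Y'_i\sim\chi'^2_{2\alpha_i}(\lambda_i)$, $i=1,2,3$, are independent non-central chi-squared variables and $Y'^+=Y'_1+Y'_2+Y'_3$. *)

theory Defs
  imports "HOL-Probability.Probability"
begin

text \<open>Density of the central chi-squared law with 2a degrees of freedom
  (Gamma law with shape a and scale 2).\<close>
definition chi2_density :: "real \<Rightarrow> real \<Rightarrow> real" where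
  "chi2_density a y =
     (if y > 0 then y powr (a - 1) * exp (- y / 2) / (2 powr a * Gamma a) else 0)"

definition ncchi2_density :: "real \<Rightarrow> real \<Rightarrow> real \<Rightarrow> real" where
  "ncchi2_density a l y =
     (\<Sum>j. exp (- l / 2) * (l / 2) ^ j / fact j * chi2_density (a + real j) y)"

definition ncchi2 :: "real \<Rightarrow> real \<Rightarrow> real measure" where
  "ncchi2 a l = density lborel (\<lambda>y. ennreal (ncchi2_density a l y))"

definition hyp1F1 :: "real \<Rightarrow> real \<Rightarrow> real \<Rightarrow> real" where
  "hyp1F1 a b x = (\<Sum>i. pochhammer a i / pochhammer b i * x ^ i / fact i)"

definition NcDir2 :: "real \<Rightarrow> real \<Rightarrow> real \<Rightarrow> real \<Rightarrow> real \<Rightarrow> real \<Rightarrow> (real \<times> real) measure" where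
  "NcDir2 a1 a2 a3 l1 l2 l3 =
     distr (Pi\<^sub>M {0::nat, 1, 2} (\<lambda>i. ncchi2 ([a1, a2, a3] ! i) ([l1, l2, l3] ! i)))
           borel
           (\<lambda>y. (y 0 / (y 0 + y 1 + y 2), y 1 / (y 0 + y 1 + y 2)))"

end

theory Submission
  imports Defs "HOL-Real_Asymp.Real_Asymp"
begin


lemma gamma_nn:
  fixes c s :: real
  assumes c: "c > 0" and s: "s > 0"
  shows "(\<integral>\<^sup>+y. ennreal (y powr (c-1) * exp (-(s*y))) * indicator {0..} y \<partial>lborel)
          = ennreal (Gamma c / s powr c)"
proof -
  have "(\<integral>\<^sup>+u. ennreal (u powr (c-1) / exp u) * indicator {0..} u \<partial>lborel) = ennreal (Gamma c)"
    by (rule nn_integral_has_integral_lebesgue'[OF _ Gamma_integral_real[OF c]]) auto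
  also have "(\<integral>\<^sup>+u. ennreal (u powr (c-1) / exp u) * indicator {0..} u \<partial>lborel)
     = ennreal s * (\<integral>\<^sup>+y. ennreal ((s*y) powr (c-1) / exp (s*y)) * indicator {0..} (s*y) \<partial>lborel)"
    using nn_integral_real_affine[of "\<lambda>u. ennreal (u powr (c-1) / exp u) * indicator {0..} u" s 0] s
    by simp
  also have "(\<lambda>y. ennreal ((s*y) powr (c-1) / exp (s*y)) * indicator {0..} (s*y))
       = (\<lambda>y. ennreal (s powr (c-1)) * (ennreal (y powr (c-1) * exp (-(s*y))) * indicator {0..} y))"
  proof
    fix y :: real
    show "ennreal ((s*y) powr (c-1) / exp (s*y)) * indicator {0..} (s*y)
       = ennreal (s powr (c-1)) * (ennreal (y powr (c-1) * exp (-(s*y))) * indicator {0..} y)"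
    proof (cases "y \<ge> 0")
      case True
      then show ?thesis using s
      proof -
        have "(s*y) powr (c-1) / exp (s*y) = s powr (c-1) * (y powr (c-1) * exp (-(s*y)))"
          using True s by (simp add: powr_mult exp_minus field_simps)
        then show ?thesis using True s by (simp add: ennreal_mult indicator_def zero_le_mult_iff)
      qed
    next
      case False
      then show ?thesis using s by (simp add: indicator_def zero_le_mult_iff)
    qed
  qed
  finally have "ennreal s * (ennreal (s powr (c-1)) * (\<integral>\<^sup>+y. ennreal (y powr (c-1) * exp (-(s*y))) * indicator {0..} y \<partial>lborel)) = ennreal (Gamma c)"
    by (simp add: nn_integral_cmult)
  then have "ennreal (s powr c) * (\<integral>\<^sup>+y. ennreal (y powr (c-1) * exp (-(s*y))) * indicator {0..} y \<partial>lborel) = ennreal (Gamma c)"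
    using s by (simp add: ennreal_mult'[symmetric] mult.assoc[symmetric] powr_mult_base)
  moreover have "ennreal (s powr c) * ennreal (Gamma c / s powr c) = ennreal (Gamma c)"
    using s c by (simp add: ennreal_mult[symmetric] Gamma_real_pos less_imp_le)
  ultimately have "ennreal (s powr c) * (\<integral>\<^sup>+y. ennreal (y powr (c-1) * exp (-(s*y))) * indicator {0..} y \<partial>lborel)
     = ennreal (s powr c) * ennreal (Gamma c / s powr c)" by simp
  then show ?thesis using s by (subst (asm) ennreal_mult_cancel_left) auto
qed


lemma chi2_mom:
  fixes b t :: real and k :: nat
  assumes b: "b > 0" and t: "t \<ge> 0"
  shows "(\<integral>\<^sup>+y. ennreal (chi2_density b y * (y ^ k * exp (-(t*y)))) \<partial>lborel)
       = ennreal (Gamma (b + k) / Gamma b * 2 ^ k * (1 + 2*t) powr (-(b + k)))"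
proof -
  let ?s = "1/2 + t"
  have eq: "ennreal (chi2_density b y * (y ^ k * exp (-(t*y))))
     = ennreal (1 / (2 powr b * Gamma b)) * (ennreal (y powr ((b + k) - 1) * exp (-(?s*y))) * indicator {0..} y)"
    for y
  proof (cases "y > 0")
    case True
    have "y powr (b - 1) * y ^ k = y powr ((b + k) - 1)"
      using True by (simp add: powr_realpow[symmetric] powr_add[symmetric] algebra_simps)
    moreover have "exp (- y / 2) * exp (-(t*y)) = exp (-(?s*y))"
      by (simp add: exp_add[symmetric] algebra_simps)
    ultimately have "chi2_density b y * (y ^ k * exp (-(t*y)))
        = 1 / (2 powr b * Gamma b) * (y powr ((b + k) - 1) * exp (-(?s*y)))"
      using True unfolding chi2_density_def
      by (simp add: field_simps)
    moreover have "ennreal (1 / (2 powr b * Gamma b) * (y powr ((b + k) - 1) * exp (-(?s*y))))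
       = ennreal (1 / (2 powr b * Gamma b)) * ennreal (y powr ((b + k) - 1) * exp (-(?s*y)))"
      using b by (intro ennreal_mult) (auto simp: Gamma_real_pos less_imp_le)
    ultimately show ?thesis using True by (simp add: indicator_def)
  next
    case False
    then show ?thesis
      by (cases "y = 0") (auto simp: chi2_density_def indicator_def)
  qed
  have "(\<integral>\<^sup>+y. ennreal (chi2_density b y * (y ^ k * exp (-(t*y)))) \<partial>lborel)
     = ennreal (1 / (2 powr b * Gamma b)) * ennreal (Gamma (b + k) / ?s powr (b + k))"
    unfolding eq using b t
    by (subst nn_integral_cmult) (auto simp: gamma_nn)
  also have "\<dots> = ennreal (Gamma (b + k) / Gamma b * 2 ^ k * (1 + 2*t) powr (-(b + k)))"
  proof -
    have s: "?s = (1 + 2*t) / 2" by simp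
    have "1 / (2 powr b * Gamma b) * (Gamma (b + k) / ?s powr (b + k))
        = Gamma (b + k) / Gamma b * 2 ^ k * (1 + 2*t) powr (-(b + k))"
    proof -
      have w: "(1 + 2*t) powr (-(b + k)) = 1 / ((1 + 2*t) powr b * (1 + 2*t) ^ k)"
      proof -
        have "(1 + 2*t) powr (-(b + k)) = inverse ((1 + 2*t) powr (b + k))" by (rule powr_minus)
        also have "(1 + 2*t) powr (b + k) = (1 + 2*t) powr b * (1 + 2*t) powr (real k)" by (rule powr_add)
        also have "(1 + 2*t) powr (real k) = (1 + 2*t) ^ k" using t by (intro powr_realpow) simp
        finally show ?thesis by (simp add: divide_inverse)
      qed
      show ?thesis using b t unfolding s w
        by (simp add: powr_divide powr_add powr_realpow field_simps)
    qed
    then show ?thesis using b t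
      by (simp add: ennreal_mult[symmetric] Gamma_real_pos less_imp_le)
  qed
  finally show ?thesis .
qed

lemma summable_poch:
  fixes a z :: real
  assumes a: "a > 0" and z: "z \<ge> 0"
  shows "summable (\<lambda>j. z ^ j / (fact j * pochhammer a j))"
proof (rule summable_ratio_test[of "1/2" "nat \<lceil>2*z\<rceil> + 1"])
  fix n assume n: "n \<ge> nat \<lceil>2*z\<rceil> + 1"
  have p: "pochhammer a n > 0" using a by (simp add: pochhammer_pos)
  have "2 * z \<le> real n - 1" using n by linarith
  moreover have "(real n + 1) * (a + n) \<ge> a + n"
    using a by (simp add: algebra_simps)
  ultimately have key: "z \<le> 1/2 * ((real n + 1) * (a + n))" using a by linarith
  have "z ^ Suc n / (fact (Suc n) * pochhammer a (Suc n))
      = (z / ((real n + 1) * (a + n))) * (z ^ n / (fact n * pochhammer a n))"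
    by (simp add: pochhammer_rec' field_simps)
  also have "\<dots> \<le> 1/2 * (z ^ n / (fact n * pochhammer a n))"
    using key a z p
    by (intro mult_right_mono) (auto simp: divide_le_eq intro!: divide_nonneg_nonneg)
  finally show "norm (z ^ Suc n / (fact (Suc n) * pochhammer a (Suc n)))
      \<le> 1/2 * norm (z ^ n / (fact n * pochhammer a n))"
    using z p a by (simp add: pochhammer_pos abs_of_pos)
qed simp


lemma chi2_measurable[measurable]: "chi2_density b \<in> borel_measurable borel"
  unfolding chi2_density_def by measurable

lemma ennreal_sums:
  fixes f :: "nat \<Rightarrow> real"
  assumes "\<And>j. 0 \<le> f j" "f sums s"
  shows "(\<Sum>j. ennreal (f j)) = ennreal s"
proof -
  have s: "summable f" using assms(2) by (rule sums_summable)
  have "suminf f = s" using assms(2) by (rule sums_unique[symmetric])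
  then show ?thesis using suminf_ennreal2[OF assms(1) s] by simp
qed

lemma nc_summable:
  fixes a l y :: real
  assumes a: "a > 0" and l: "l \<ge> 0"
  shows "summable (\<lambda>j. exp (- l / 2) * (l / 2) ^ j / fact j * chi2_density (a + real j) y)"
proof (cases "y > 0")
  case False
  then show ?thesis by (simp add: chi2_density_def)
next
  case True
  let ?K = "exp (- l / 2) * (y powr (a - 1) * exp (- y / 2) / (2 powr a * Gamma a))"
  have eq: "exp (- l / 2) * (l / 2) ^ j / fact j * chi2_density (a + real j) y
     = ?K * ((l/2 * (y/2)) ^ j / (fact j * pochhammer a j))" for j
  proof -
    have "a \<notin> \<int>\<^sub>\<le>\<^sub>0" using a nonpos_Ints_nonpos by fastforce
    then have "pochhammer a j = Gamma (a + real j) / Gamma a" by (rule pochhammer_Gamma)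
    then have g: "Gamma (a + real j) = Gamma a * pochhammer a j"
      using Gamma_real_pos[OF a] by (simp add: field_simps)
    have p1: "y powr (a + real j - 1) = y powr (a - 1) * y ^ j"
      using True by (simp add: powr_realpow[symmetric] powr_add[symmetric] algebra_simps)
    have p2: "(2::real) powr (a + real j) = 2 powr a * 2 ^ j"
      by (simp add: powr_realpow[symmetric] powr_add)
    have alg: "E * L / F * (Ya * Y * X / (A * T * (G * P))) = E * (Ya * X / (A * G)) * (L * (Y / T) / (F * P))"
      for E L F Ya Y X A T G P :: real
      by (simp add: divide_inverse mult_ac)
    have pw: "(l/2 * (y/2)) ^ j = (l/2) ^ j * (y ^ j / 2 ^ j)"
      by (simp only: power_mult_distrib power_divide)
    show ?thesis using True unfolding chi2_density_def g p1 p2 pw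
      by (simp only: if_True alg)
  qed
  have "summable (\<lambda>j. ?K * ((l/2 * (y/2)) ^ j / (fact j * pochhammer a j)))"
    by (rule summable_mult, rule summable_poch[OF a]) (use l True in simp)
  then show ?thesis unfolding eq .
qed

lemma nc_nonneg: "a > 0 \<Longrightarrow> l \<ge> 0 \<Longrightarrow> 0 \<le> exp (- l / 2) * (l / 2) ^ j / fact j * chi2_density (a + real j) y"
  by (auto simp: chi2_density_def Gamma_real_pos intro!: mult_nonneg_nonneg divide_nonneg_nonneg)

lemma ncchi2_density_nonneg: "a > 0 \<Longrightarrow> l \<ge> 0 \<Longrightarrow> 0 \<le> ncchi2_density a l y"
  unfolding ncchi2_density_def using nc_summable nc_nonneg by (intro suminf_nonneg) auto

lemma nc_ennreal:
  fixes a l y c :: real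
  assumes a: "a > 0" and l: "l \<ge> 0" and c: "c \<ge> 0"
  shows "ennreal (ncchi2_density a l y * c)
     = (\<Sum>j. ennreal (exp (- l / 2) * (l / 2) ^ j / fact j * chi2_density (a + real j) y * c))"
proof -
  let ?f = "\<lambda>j. exp (- l / 2) * (l / 2) ^ j / fact j * chi2_density (a + real j) y"
  have s: "summable ?f" by (rule nc_summable[OF a l])
  have "ennreal (ncchi2_density a l y * c) = ennreal (\<Sum>j. ?f j * c)"
    unfolding ncchi2_density_def by (subst suminf_mult2[OF s]) (rule refl)
  also have "\<dots> = (\<Sum>j. ennreal (?f j * c))"
  proof (rule suminf_ennreal2[symmetric])
    show "summable (\<lambda>j. ?f j * c)" by (rule summable_mult2[OF s])
    show "0 \<le> ?f j * c" for j by (rule mult_nonneg_nonneg[OF nc_nonneg[OF a l] c])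
  qed
  finally show ?thesis .
qed

lemma chi2_nonneg: "b > 0 \<Longrightarrow> 0 \<le> chi2_density b y"
  by (auto simp: chi2_density_def Gamma_real_pos intro!: divide_nonneg_nonneg)

lemma nc_ennreal_measurable[measurable]:
  assumes a: "a > 0" and l: "l \<ge> 0"
  shows "(\<lambda>y. ennreal (ncchi2_density a l y)) \<in> borel_measurable borel"
  unfolding ncchi2_density_def by measurable

lemma nc_mom_gen:
  fixes a l t :: real and k :: nat
  assumes a: "a > 0" and l: "l \<ge> 0" and t: "t \<ge> 0"
  shows "(\<integral>\<^sup>+y. ennreal (ncchi2_density a l y * (y ^ k * exp (-(t*y)))) \<partial>lborel)
     = (\<Sum>j. ennreal (exp (- l / 2) * (l / 2) ^ j / fact j *
          (Gamma (a + real j + k) / Gamma (a + real j) * 2 ^ k * (1 + 2*t) powr (-(a + real j + k)))))"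
proof -
  have "(\<integral>\<^sup>+y. ennreal (ncchi2_density a l y * (y ^ k * exp (-(t*y)))) \<partial>lborel)
     = (\<integral>\<^sup>+y. (\<Sum>j. ennreal (exp (- l / 2) * (l / 2) ^ j / fact j) *
            ennreal (chi2_density (a + real j) y * (y ^ k * exp (-(t*y))))) \<partial>lborel)"
  proof (rule nn_integral_cong)
    fix y :: real
    show "ennreal (ncchi2_density a l y * (y ^ k * exp (-(t*y))))
      = (\<Sum>j. ennreal (exp (- l / 2) * (l / 2) ^ j / fact j) *
            ennreal (chi2_density (a + real j) y * (y ^ k * exp (-(t*y)))))"
    proof (cases "y > 0")
      case True
      have "ennreal (exp (- l / 2) * (l / 2) ^ j / fact j * chi2_density (a + real j) y * (y ^ k * exp (-(t*y))))
         = ennreal (exp (- l / 2) * (l / 2) ^ j / fact j) * ennreal (chi2_density (a + real j) y * (y ^ k * exp (-(t*y))))"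
        for j
        unfolding mult.assoc[of "exp (- l / 2) * (l / 2) ^ j / fact j"]
        using True a l chi2_nonneg[of "a + real j" y]
        by (intro ennreal_mult) auto
      then show ?thesis
        using nc_ennreal[OF a l, of "y ^ k * exp (-(t*y))" y] True by simp
    next
      case False
      then show ?thesis unfolding ncchi2_density_def by (simp add: chi2_density_def)
    qed
  qed
  also have "\<dots> = (\<Sum>j. ennreal (exp (- l / 2) * (l / 2) ^ j / fact j) *
        (\<integral>\<^sup>+y. ennreal (chi2_density (a + real j) y * (y ^ k * exp (-(t*y)))) \<partial>lborel))"
    by (subst nn_integral_suminf) (auto simp: nn_integral_cmult)
  also have "\<dots> = (\<Sum>j. ennreal (exp (- l / 2) * (l / 2) ^ j / fact j *
          (Gamma (a + real j + k) / Gamma (a + real j) * 2 ^ k * (1 + 2*t) powr (-(a + real j + k)))))"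
    using a t l
    by (subst chi2_mom) (auto simp: ennreal_mult[symmetric] Gamma_real_pos add_pos_nonneg)
  finally show ?thesis .
qed


lemma exp_sums_real: "(\<lambda>n. z ^ n / fact n) sums exp (z::real)"
  using exp_converges[of z] by (simp add: divide_inverse mult.commute)

lemma jexp_sums: "(\<lambda>n. real n * z ^ n / fact n) sums (z * exp (z::real))"
proof -
  have "(\<lambda>n. z * (z ^ n / fact n)) sums (z * exp z)"
    by (rule sums_mult[OF exp_sums_real])
  moreover have "(\<lambda>n. real (Suc n) * z ^ Suc n / fact (Suc n)) = (\<lambda>n. z * (z ^ n / fact n))"
  proof
    fix n
    have "real (Suc n) * z ^ Suc n / fact (Suc n) = real (Suc n) * z ^ Suc n / (real (Suc n) * fact n)"
      by (simp only: fact_Suc of_nat_id)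
    also have "\<dots> = z ^ Suc n / fact n" by (rule mult_divide_mult_cancel_left) simp
    finally show "real (Suc n) * z ^ Suc n / fact (Suc n) = z * (z ^ n / fact n)" by simp
  qed
  ultimately have "(\<lambda>n. real (Suc n) * z ^ Suc n / fact (Suc n)) sums (z * exp z)" by simp
  then show ?thesis by (subst (asm) sums_Suc_iff) simp
qed

lemma ajexp_sums: "(\<lambda>n. (a + real n) * z ^ n / fact n) sums ((a + z) * exp (z::real))"
proof -
  have "(\<lambda>n. a * (z ^ n / fact n) + real n * z ^ n / fact n) sums (a * exp z + z * exp z)"
    by (intro sums_add sums_mult exp_sums_real jexp_sums)
  then show ?thesis by (simp add: algebra_simps add_divide_distrib)
qed

lemma powr_split:
  fixes w b :: real and j :: nat
  assumes "w > 0"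
  shows "w powr (-(b + real j)) = w powr (-b) * inverse w ^ j"
proof -
  have "w powr (-(b + real j)) = inverse (w powr (b + real j))" by (rule powr_minus)
  also have "w powr (b + real j) = w powr b * w powr (real j)" by (rule powr_add)
  also have "w powr (real j) = w ^ j" using assms by (intro powr_realpow) simp
  finally show ?thesis using assms by (simp add: powr_minus power_inverse)
qed

lemma nc_mom0:
  fixes a l t :: real
  assumes a: "a > 0" and l: "l \<ge> 0" and t: "t \<ge> 0"
  shows "(\<integral>\<^sup>+y. ennreal (ncchi2_density a l y * exp (-(t*y))) \<partial>lborel)
     = ennreal (exp (- l / 2) * (1 + 2*t) powr (-a) * exp (l / 2 / (1 + 2*t)))"
proof -
  let ?w = "1 + 2*t" and ?z = "l / 2 / (1 + 2*t)"
  have zj: "?z ^ j = (l/2) ^ j * inverse ?w ^ j" for j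
    by (simp only: divide_inverse[of "l/2"] power_mult_distrib)
  have w: "?w > 0" using t by simp
  have "(\<integral>\<^sup>+y. ennreal (ncchi2_density a l y * exp (-(t*y))) \<partial>lborel)
     = (\<Sum>j. ennreal (exp (- l / 2) * (l / 2) ^ j / fact j *
          (Gamma (a + real j + real 0) / Gamma (a + real j) * 2 ^ 0 * ?w powr (-(a + real j + real 0)))))"
    using nc_mom_gen[OF a l t, of 0] by simp
  also have "\<dots> = (\<Sum>j. ennreal (exp (- l / 2) * ?w powr (-a) * (?z ^ j / fact j)))"
  proof (rule suminf_cong)
    fix j
    have aj: "a + real j > 0" using a by (simp add: add_pos_nonneg)
    have "Gamma (a + real j) \<noteq> 0" using Gamma_real_pos[OF aj] by simp
    then show "ennreal (exp (- l / 2) * (l / 2) ^ j / fact j *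
          (Gamma (a + real j + real 0) / Gamma (a + real j) * 2 ^ 0 * ?w powr (-(a + real j + real 0))))
      = ennreal (exp (- l / 2) * ?w powr (-a) * (?z ^ j / fact j))"
    proof -
      have h1: "Gamma (a + real j + real 0) / Gamma (a + real j) * 2 ^ 0 = 1" using \<open>Gamma (a + real j) \<noteq> 0\<close> by simp
      have h2: "?w powr (-(a + real j + real 0)) = ?w powr (-a) * inverse ?w ^ j" using powr_split[OF w, of a j] by simp
      have alg0: "E * L / F * (W * I) = E * W * (L * I / F)" for E L F W I :: real
        by (simp add: divide_inverse mult_ac)
      show ?thesis unfolding zj h1 h2 by (simp only: mult_1_left alg0)
    qed
  qed
  also have "\<dots> = ennreal (exp (- l / 2) * ?w powr (-a) * exp ?z)"
    using l w by (intro ennreal_sums sums_mult exp_sums_real) auto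
  finally show ?thesis .
qed

lemma nc_mom1:
  fixes a l t :: real
  assumes a: "a > 0" and l: "l \<ge> 0" and t: "t \<ge> 0"
  shows "(\<integral>\<^sup>+y. ennreal (ncchi2_density a l y * (y * exp (-(t*y)))) \<partial>lborel)
     = ennreal (2 * exp (- l / 2) * (1 + 2*t) powr (-(a + 1)) * ((a + l / 2 / (1 + 2*t)) * exp (l / 2 / (1 + 2*t))))"
proof -
  let ?w = "1 + 2*t" and ?z = "l / 2 / (1 + 2*t)"
  have zj: "?z ^ j = (l/2) ^ j * inverse ?w ^ j" for j
    by (simp only: divide_inverse[of "l/2"] power_mult_distrib)
  have w: "?w > 0" using t by simp
  have "(\<integral>\<^sup>+y. ennreal (ncchi2_density a l y * (y * exp (-(t*y)))) \<partial>lborel)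
     = (\<Sum>j. ennreal (exp (- l / 2) * (l / 2) ^ j / fact j *
          (Gamma (a + real j + real 1) / Gamma (a + real j) * 2 ^ 1 * ?w powr (-(a + real j + real 1)))))"
    using nc_mom_gen[OF a l t, of 1] by simp
  also have "\<dots> = (\<Sum>j. ennreal (2 * exp (- l / 2) * ?w powr (-(a + 1)) * ((a + real j) * ?z ^ j / fact j)))"
  proof (rule suminf_cong)
    fix j
    have aj: "a + real j > 0" using a by (simp add: add_pos_nonneg)
    have "a + real j \<notin> \<int>\<^sub>\<le>\<^sub>0" using aj nonpos_Ints_nonpos by fastforce
    then have G: "Gamma (a + real j + 1) = (a + real j) * Gamma (a + real j)" by (rule Gamma_plus1)
    have "Gamma (a + real j) \<noteq> 0" using Gamma_real_pos[OF aj] by simp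
    then show "ennreal (exp (- l / 2) * (l / 2) ^ j / fact j *
          (Gamma (a + real j + real 1) / Gamma (a + real j) * 2 ^ 1 * ?w powr (-(a + real j + real 1))))
      = ennreal (2 * exp (- l / 2) * ?w powr (-(a + 1)) * ((a + real j) * ?z ^ j / fact j))"
    proof -
      note Gne = \<open>Gamma (a + real j) \<noteq> 0\<close>
      have h1: "Gamma (a + real j + real 1) / Gamma (a + real j) * 2 ^ 1 = 2 * (a + real j)" using Gne G by simp
      have h2: "?w powr (-(a + real j + real 1)) = ?w powr (-(a + 1)) * inverse ?w ^ j"
        using powr_split[OF w, of "a + 1" j] by (simp add: algebra_simps)
      have alg1: "E * L / F * (2 * A * (W * I)) = 2 * E * W * (A * (L * I) / F)" for E L F A W I :: real
        by (simp add: divide_inverse mult_ac)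
      show ?thesis unfolding zj h1 h2 by (simp only: alg1)
    qed
  qed
  also have "\<dots> = ennreal (2 * exp (- l / 2) * ?w powr (-(a + 1)) * ((a + ?z) * exp ?z))"
    using l w a by (intro ennreal_sums sums_mult ajexp_sums) auto
  finally show ?thesis .
qed

lemma ncchi2_prob:
  fixes a l :: real
  assumes a: "a > 0" and l: "l \<ge> 0"
  shows "prob_space (ncchi2 a l)"
proof
  have "emeasure (ncchi2 a l) (space (ncchi2 a l)) = (\<integral>\<^sup>+y. ennreal (ncchi2_density a l y * exp (-(0*y))) \<partial>lborel)"
    unfolding ncchi2_def using a l by (simp add: emeasure_density)
  also have "\<dots> = 1"
    using nc_mom0[OF a l, of 0] by (simp add: exp_minus)
  finally show "emeasure (ncchi2 a l) (space (ncchi2 a l)) = 1" .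
qed


lemma laplace_sq:
  fixes S :: real
  assumes S: "S > 0"
  shows "(\<integral>\<^sup>+t. ennreal (t * exp (-(t*S))) * indicator {0..} t \<partial>lborel) = ennreal (1 / S^2)"
proof -
  let ?F = "\<lambda>t. -(t/S + 1/S^2) * exp (-(t*S))"
  have "(\<integral>\<^sup>+t. ennreal (t * exp (-(t*S))) * indicator {0..} t \<partial>lborel) = ennreal (0 - ?F 0)"
  proof (rule nn_integral_FTC_atLeast)
    show "(\<lambda>t. t * exp (-(t*S))) \<in> borel_measurable borel" by measurable
    show "DERIV ?F x :> x * exp (-(x*S))" for x
      using S by (auto intro!: derivative_eq_intros simp: field_simps power2_eq_square)
    show "0 \<le> x \<Longrightarrow> 0 \<le> x * exp (-(x*S))" for x by simp
    show "(?F \<longlongrightarrow> 0) at_top" using S by real_asymp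
  qed
  then show ?thesis by simp
qed

lemma beta_like:
  fixes c :: real
  assumes c: "c > 2"
  shows "(\<integral>\<^sup>+t. ennreal (t * (1 + 2*t) powr (-c)) * indicator {0..} t \<partial>lborel)
       = ennreal (1 / (4 * (c - 1) * (c - 2)))"
proof -
  let ?F = "\<lambda>t. -((1 + 2*t) powr (-(c-2))) / (4*(c-2)) + (1 + 2*t) powr (-(c-1)) / (4*(c-1))"
  have "(\<integral>\<^sup>+t. ennreal (t * (1 + 2*t) powr (-c)) * indicator {0..} t \<partial>lborel) = ennreal (0 - ?F 0)"
  proof (rule nn_integral_FTC_atLeast)
    show "(\<lambda>t. t * (1 + 2*t) powr (-c)) \<in> borel_measurable borel" by measurable
    show "DERIV ?F x :> x * (1 + 2*x) powr (-c)" if x: "0 \<le> x" for x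
    proof -
      have g: "DERIV (\<lambda>t. 1 + 2*t) x :> 2" by (auto intro!: derivative_eq_intros)
      have pos: "1 + 2*x > 0" using x by simp
      note d1 = DERIV_fun_powr[OF g pos, of "-(c-2)"]
      note d2 = DERIV_fun_powr[OF g pos, of "-(c-1)"]
      have "DERIV ?F x :> -((-(c-2)) * (1 + 2*x) powr (-(c-2) - of_nat 1) * 2) / (4*(c-2))
                          + (-(c-1)) * (1 + 2*x) powr (-(c-1) - of_nat 1) * 2 / (4*(c-1))"
        by (intro DERIV_add DERIV_cdivide DERIV_minus d1 d2)
      moreover have "-((-(c-2)) * (1 + 2*x) powr (-(c-2) - of_nat 1) * 2) / (4*(c-2))
                          + (-(c-1)) * (1 + 2*x) powr (-(c-1) - of_nat 1) * 2 / (4*(c-1))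
                   = x * (1 + 2*x) powr (-c)"
      proof -
        have e1: "(1 + 2*x) powr (-(c-2) - of_nat 1) = (1 + 2*x) * (1 + 2*x) powr (-c)"
        proof -
          have "-(c-2) - of_nat 1 = 1 + (-c)" by simp
          then show ?thesis using powr_add[of "1 + 2*x" 1 "-c"] pos by simp
        qed
        have e2: "(1 + 2*x) powr (-(c-1) - of_nat 1) = (1 + 2*x) powr (-c)"
          by simp
        have n1: "c - 2 \<noteq> 0" "c - 1 \<noteq> 0" using c by auto
        have gen: "-((-(c-2)) * ((1 + 2*x) * P) * 2) / (4*(c-2)) + (-(c-1)) * P * 2 / (4*(c-1)) = x * P" for P
        proof -
          have t1: "-((-(c-2)) * ((1 + 2*x) * P) * 2) / (4*(c-2)) = (1 + 2*x) * P / 2"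
            using n1 by (simp add: field_simps)
          have t2: "(-(c-1)) * P * 2 / (4*(c-1)) = - P / 2"
            using n1 by (simp add: field_simps)
          show ?thesis unfolding t1 t2 by (simp add: field_simps)
        qed
        show ?thesis unfolding e1 e2 by (rule gen)
      qed
      ultimately show ?thesis by simp
    qed
    show "0 \<le> x \<Longrightarrow> 0 \<le> x * (1 + 2*x) powr (-c)" for x by simp
    show "(?F \<longlongrightarrow> 0) at_top" using c by real_asymp
  qed
  also have "0 - ?F 0 = 1 / (4 * (c - 1) * (c - 2))"
  proof -
    have "0 - ?F 0 = 1 / (4*(c-2)) - 1 / (4*(c-1))" by simp
    also have "\<dots> = (1 * (4*(c-1)) - 1 * (4*(c-2))) / ((4*(c-2)) * (4*(c-1)))"
      using c by (intro diff_frac_eq) auto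
    also have "\<dots> = 4 / (4 * (4 * (c - 1) * (c - 2)))"
      by (simp add: algebra_simps)
    also have "\<dots> = 1 / (4 * (c - 1) * (c - 2))"
      using mult_divide_mult_cancel_left[of "4::real" 1 "4 * (c - 1) * (c - 2)"] by simp
    finally show ?thesis .
  qed
  finally show ?thesis .
qed


lemma exp_sums_real': "(\<lambda>n. z ^ n / fact n) sums exp (z::real)"
  using exp_converges[of z] by (simp add: divide_inverse mult.commute)

lemma poch_ratio:
  fixes a :: real
  assumes a: "a > 0"
  shows "pochhammer a n / pochhammer (a + 2) n = a * (a + 1) / ((a + n) * (a + n + 1))"
proof -
  have h1: "pochhammer a (Suc (Suc n)) = a * (a + 1) * pochhammer (a + 2) n"
    by (simp add: pochhammer_rec algebra_simps)
  have h2: "pochhammer a (Suc (Suc n)) = (a + n + 1) * (a + n) * pochhammer a n"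
    by (simp add: pochhammer_rec' algebra_simps)
  have p: "pochhammer (a + 2) n > 0" using a by (intro pochhammer_pos) simp
  have q: "(a + n) * (a + n + 1) > 0" using a by (simp add: add_pos_nonneg)
  have "pochhammer a n * ((a + n) * (a + n + 1)) = a * (a + 1) * pochhammer (a + 2) n"
    using h1 h2 by (simp add: algebra_simps)
  then show ?thesis using p q by (simp add: field_simps)
qed

lemma hyp_sums:
  fixes a x :: real
  assumes a: "a > 0" and x: "x \<ge> 0"
  shows "(\<lambda>n. 1 / ((a + n) * (a + n + 1)) * (x ^ n / fact n)) sums (hyp1F1 a (a + 2) x / (a * (a + 1)))"
proof -
  let ?t = "\<lambda>n. 1 / ((a + n) * (a + n + 1)) * (x ^ n / fact n)"
  have tn: "0 \<le> ?t n" for n using a x by (simp add: add_pos_nonneg less_imp_le)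
  have le: "?t n \<le> 1 / (a * (a + 1)) * (x ^ n / fact n)" for n
  proof (rule mult_right_mono)
    have "a * (a + 1) \<le> (a + n) * (a + n + 1)" using a by (intro mult_mono) auto
    then show "1 / ((a + n) * (a + n + 1)) \<le> 1 / (a * (a + 1))"
      using a by (intro divide_left_mono) auto
  qed (use x in simp)
  have se: "summable (\<lambda>n. 1 / (a * (a + 1)) * (x ^ n / fact n))"
    by (rule summable_mult) (rule sums_summable[OF exp_sums_real'])
  have sm: "summable ?t"
  proof (rule summable_comparison_test[OF _ se])
    show "\<exists>N. \<forall>n\<ge>N. norm (?t n) \<le> 1 / (a * (a + 1)) * (x ^ n / fact n)"
      using tn le by (metis abs_of_nonneg real_norm_def)
  qed
  have eq: "pochhammer a n / pochhammer (a + 2) n * x ^ n / fact n = a * (a + 1) * ?t n" for n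
    using poch_ratio[OF a, of n] by simp
  have "(\<lambda>n. a * (a + 1) * ?t n) sums (a * (a + 1) * suminf ?t)"
    by (rule sums_mult) (use sm in \<open>simp add: summable_sums\<close>)
  then have "(\<lambda>n. pochhammer a n / pochhammer (a + 2) n * x ^ n / fact n) sums (a * (a + 1) * suminf ?t)"
    by (simp only: eq)
  then have h: "hyp1F1 a (a + 2) x = a * (a + 1) * suminf ?t"
    unfolding hyp1F1_def by (rule sums_unique[symmetric])
  define S where "S = suminf ?t"
  have k: "a * (a + 1) \<noteq> 0" using a by simp
  from h have "S = hyp1F1 a (a + 2) x / (a * (a + 1))"
    unfolding S_def[symmetric] using k by (simp add: eq_divide_eq mult.commute)
  then show ?thesis using summable_sums[OF sm] unfolding S_def by simp
qed

lemma shift1: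
  fixes x s :: real
  assumes "(\<lambda>n. g n * (x ^ n / fact n)) sums s"
  shows "(\<lambda>k. real k * g (k - 1) * (x ^ k / fact k)) sums (x * s)"
proof -
  have pt: "real (Suc n) * g (Suc n - 1) * (x ^ Suc n / fact (Suc n)) = x * (g n * (x ^ n / fact n))" for n
  proof -
    have "real (Suc n) * (x ^ Suc n / fact (Suc n)) = real (Suc n) * x ^ Suc n / (real (Suc n) * fact n)"
      by (simp only: fact_Suc of_nat_id times_divide_eq_right)
    also have "\<dots> = x ^ Suc n / fact n" by (rule mult_divide_mult_cancel_left) simp
    also have "\<dots> = x * (x ^ n / fact n)" by simp
    finally have h: "real (Suc n) * (x ^ Suc n / fact (Suc n)) = x * (x ^ n / fact n)" .
    have "real (Suc n) * g (Suc n - 1) * (x ^ Suc n / fact (Suc n)) = g n * (real (Suc n) * (x ^ Suc n / fact (Suc n)))"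
      by (simp only: diff_Suc_1 mult_ac)
    also have "\<dots> = g n * (x * (x ^ n / fact n))" by (simp only: h)
    also have "\<dots> = x * (g n * (x ^ n / fact n))" by (simp only: mult_ac)
    finally show ?thesis .
  qed
  have "(\<lambda>n. real (Suc n) * g (Suc n - 1) * (x ^ Suc n / fact (Suc n))) sums (x * s)"
    by (simp only: pt) (rule sums_mult[OF assms])
  then show ?thesis by (subst (asm) sums_Suc_iff) simp
qed


lemma frac_cancel: fixes X c D1 D2 :: real
  assumes "D2 \<noteq> 0" "X = c * D2" shows "X / (D1 * D2) = c / D1"
  using assms by simp

lemma coef_id:
  fixes c r :: real assumes c: "c > 1" and r: "r \<ge> 0"
  shows "c*(r+1)/((c+r+1)*(c+r+2)) + (r+1)*r/((c+r)*(c+r+1)) + c*(r+1)/((c+r)*(c+r+1)) + c*(c+1)/((c+r+1)*(c+r+2)) = 1"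
proof -
  have p: "c + r > 0" "c + r + 1 > 0" "c + r + 2 > 0" using c r by auto
  have a1: "c*(r+1)/((c+r+1)*(c+r+2)) + c*(c+1)/((c+r+1)*(c+r+2)) = c / (c+r+1)"
    unfolding add_divide_distrib[symmetric] using p by (intro frac_cancel) (auto simp: algebra_simps)
  have a2: "(r+1)*r/((c+r)*(c+r+1)) + c*(r+1)/((c+r)*(c+r+1)) = (r+1) / (c+r+1)"
    unfolding add_divide_distrib[symmetric] mult.commute[of "c+r"]
    using p by (intro frac_cancel) (auto simp: algebra_simps)
  have a3: "c / (c+r+1) + (r+1)/(c+r+1) = 1" using p unfolding add_divide_distrib[symmetric] by simp
  show ?thesis using a1 a2 a3 by linarith
qed

lemma contig:
  fixes c x :: real assumes c: "c > 1" and x: "x > 0"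
  shows "(\<lambda>n. 1 / ((c + real n + 1) * (c + real n + 2)) * (x ^ n / fact n)) sums
           ((exp x - hyp1F1 c (c + 2) x - x * hyp1F1 c (c + 2) x / (c + 1)) / (x * (c + x)))"
proof -
  define F where "F = hyp1F1 c (c + 2) x"
  define P1 where "P1 = (\<lambda>n::nat. 1 / ((c + real n) * (c + real n + 1)))"
  define P2 where "P2 = (\<lambda>n::nat. 1 / ((c + real n + 1) * (c + real n + 2)))"
  have sF: "(\<lambda>n. P1 n * (x ^ n / fact n)) sums (F / (c * (c + 1)))"
    unfolding P1_def F_def by (rule hyp_sums) (use c x in auto)
  have sU0: "summable (\<lambda>n. P2 n * (x ^ n / fact n))"
  proof -
    have "(\<lambda>n. 1 / ((c + 1 + real n) * (c + 1 + real n + 1)) * (x ^ n / fact n)) sums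
            (hyp1F1 (c + 1) (c + 1 + 2) x / ((c + 1) * (c + 1 + 1)))"
      by (rule hyp_sums) (use c x in auto)
    moreover have "(\<lambda>n. 1 / ((c + 1 + real n) * (c + 1 + real n + 1)) * (x ^ n / fact n))
         = (\<lambda>n. P2 n * (x ^ n / fact n))"
      unfolding P2_def by (rule ext) (simp add: algebra_simps)
    ultimately show ?thesis by (metis sums_summable)
  qed
  define U where "U = suminf (\<lambda>n. P2 n * (x ^ n / fact n))"
  have sU: "(\<lambda>n. P2 n * (x ^ n / fact n)) sums U" unfolding U_def using sU0 by (rule summable_sums)
  have s1: "(\<lambda>k. real k * P2 (k - 1) * (x ^ k / fact k)) sums (x * U)" by (rule shift1[OF sU])
  have s2: "(\<lambda>k. real k * (real (k - 1) * P2 (k - 1 - 1)) * (x ^ k / fact k)) sums (x * (x * U))"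
    by (rule shift1[OF s1])
  have s3: "(\<lambda>k. real k * P1 (k - 1) * (x ^ k / fact k)) sums (x * (F / (c * (c + 1))))"
    by (rule shift1[OF sF])
  have e: "(\<lambda>k. x ^ k / fact k) sums exp x" by (rule exp_sums_real')
  have comb: "(\<lambda>k. c * (real k * P2 (k - 1) * (x ^ k / fact k))
        + real k * (real (k - 1) * P2 (k - 1 - 1)) * (x ^ k / fact k)
        + c * (real k * P1 (k - 1) * (x ^ k / fact k))
        + c * (c + 1) * (P1 k * (x ^ k / fact k)) - x ^ k / fact k)
      sums (c * (x * U) + x * (x * U) + c * (x * (F / (c * (c + 1)))) + c * (c + 1) * (F / (c * (c + 1))) - exp x)"
    by (intro sums_diff sums_add sums_mult s1 s2 s3 sF e)
  have zero: "c * (real k * P2 (k - 1) * (x ^ k / fact k))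
        + real k * (real (k - 1) * P2 (k - 1 - 1)) * (x ^ k / fact k)
        + c * (real k * P1 (k - 1) * (x ^ k / fact k))
        + c * (c + 1) * (P1 k * (x ^ k / fact k)) - x ^ k / fact k = 0" for k
  proof -
    have co: "c * real k * P2 (k - 1) + real k * (real (k - 1) * P2 (k - 1 - 1))
        + c * real k * P1 (k - 1) + c * (c + 1) * P1 k = 1"
    proof (cases k)
      case 0
      then show ?thesis unfolding P1_def using c by simp
    next
      case (Suc j)
      have t1: "c * real k * P2 (k - 1) = c*(real j+1)/((c+real j+1)*(c+real j+2))"
        by (simp add: Suc P2_def)
      have t2: "real k * (real (k - 1) * P2 (k - 1 - 1)) = (real j+1)*real j/((c+real j)*(c+real j+1))"
      proof (cases j)
        case 0 then show ?thesis by (simp add: Suc)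
      next
        case (Suc i) then show ?thesis using \<open>k = Suc j\<close> by (simp add: P2_def algebra_simps)
      qed
      have t3: "c * real k * P1 (k - 1) = c*(real j+1)/((c+real j)*(c+real j+1))"
        by (simp add: Suc P1_def)
      have t4: "c * (c + 1) * P1 k = c*(c+1)/((c+real j+1)*(c+real j+2))"
        by (simp add: Suc P1_def algebra_simps)
      show ?thesis unfolding t1 t2 t3 t4 using coef_id[OF c, of "real j"] by simp
    qed
    have "c * (real k * P2 (k - 1) * (x ^ k / fact k))
        + real k * (real (k - 1) * P2 (k - 1 - 1)) * (x ^ k / fact k)
        + c * (real k * P1 (k - 1) * (x ^ k / fact k))
        + c * (c + 1) * (P1 k * (x ^ k / fact k)) - x ^ k / fact k
        = (c * real k * P2 (k - 1) + real k * (real (k - 1) * P2 (k - 1 - 1))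
        + c * real k * P1 (k - 1) + c * (c + 1) * P1 k - 1) * (x ^ k / fact k)"
      by (simp only: algebra_simps)
    then show ?thesis using co by simp
  qed
  have "(\<lambda>k. 0::real) sums (c * (x * U) + x * (x * U) + c * (x * (F / (c * (c + 1)))) + c * (c + 1) * (F / (c * (c + 1))) - exp x)"
    using comb by (simp only: zero)
  then have Z: "c * (x * U) + x * (x * U) + c * (x * (F / (c * (c + 1)))) + c * (c + 1) * (F / (c * (c + 1))) - exp x = 0"
    using sums_zero sums_unique by metis
  have k: "c * (c + 1) \<noteq> 0" using c by simp
  have cc1: "c * (x * (F / (c * (c + 1)))) = x * F / (c + 1)"
  proof -
    have "c * (x * (F / (c * (c + 1)))) = c * (x * F) / (c * (c + 1))" by (simp only: times_divide_eq_right)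
    also have "\<dots> = x * F / (c + 1)" by (rule mult_divide_mult_cancel_left) (use c in simp)
    finally show ?thesis .
  qed
  have cc2: "c * (c + 1) * (F / (c * (c + 1))) = F"
    by (simp only: times_divide_eq_right nonzero_mult_div_cancel_left[OF k])
  note cc = cc1 cc2
  have "x * (c + x) * U = exp x - F - x * F / (c + 1)"
    using Z unfolding cc by (simp add: algebra_simps)
  then have "U = (exp x - F - x * F / (c + 1)) / (x * (c + x))"
    using c x by (simp add: eq_divide_eq mult.commute)
  then show ?thesis using sU unfolding P2_def F_def by simp
qed


lemma val_alg:
  fixes A x p B m e X F0 F1 :: real
  assumes A: "A > 0" and x: "x > 0" and eX: "e * X = 1"
  shows "e * p * (F0 / (A * (A + 1))) + e * B * (F1 / ((A + 1) * (A + 2))) + e * m * ((X - F1 - x * F1 / (A + 2)) / (x * (A + 1 + x)))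
   = p / (A * (A + 1)) * e * F0
     + 1 / (A + 2) * (B / (A + 1) - m / (A + 1 + x)) * e * F1
     + m / (x * (A + 1 + x)) * (1 - e * F1)"
proof -
  have n: "A \<noteq> 0" "A + 1 \<noteq> 0" "A + 2 \<noteq> 0" "x \<noteq> 0" "A + 1 + x \<noteq> 0" using A x by auto
  have m3: "e * m * ((X - F1 - x * F1 / (A + 2)) / (x * (A + 1 + x)))
     = m / (x * (A + 1 + x)) * (1 - e * F1) - 1 / (A + 2) * (m / (A + 1 + x)) * e * F1"
  proof -
    have "e * (X - F1 - x * F1 / (A + 2)) = 1 - e * F1 - x * (e * F1) / (A + 2)"
      using eX by (simp add: algebra_simps)
    then have "e * m * ((X - F1 - x * F1 / (A + 2)) / (x * (A + 1 + x)))
       = m * (1 - e * F1 - x * (e * F1) / (A + 2)) / (x * (A + 1 + x))"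
      by (simp add: mult_ac times_divide_eq_right)
    also have "\<dots> = m / (x * (A + 1 + x)) * (1 - e * F1) - 1 / (A + 2) * (m / (A + 1 + x)) * (e * F1)"
    proof -
      have gen: "m * (1 - g - x * g / K) / (x * D) = m / (x * D) * (1 - g) - 1 / K * (m / D) * g"
        if "x \<noteq> 0" "K \<noteq> 0" "D \<noteq> 0" for g K D :: real
        using that by (simp add: field_simps)
      show ?thesis by (rule gen) (use n in auto)
    qed
    also have "\<dots> = m / (x * (A + 1 + x)) * (1 - e * F1) - 1 / (A + 2) * (m / (A + 1 + x)) * e * F1"
      by (simp only: mult.assoc)
    finally show ?thesis .
  qed
  have gen2: "e * p * (F0 / P0) + e * B * (F1 / (A1 * K)) + (T - 1 / K * (m / D) * e * F1)
     = p / P0 * e * F0 + 1 / K * (B / A1 - m / D) * e * F1 + T"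
    if "P0 \<noteq> 0" "A1 \<noteq> 0" "K \<noteq> 0" "D \<noteq> 0" for P0 A1 K D T :: real
    using that by (simp add: field_simps)
  show ?thesis unfolding m3 by (rule gen2) (use n in auto)
qed

lemma series_main:
  fixes A x p B m :: real
  assumes A: "A > 0" and x: "x > 0"
  shows "(\<lambda>n. exp (-x) * (p / ((A + real n) * (A + real n + 1)) + B / ((A + real n + 1) * (A + real n + 2))
            + m / ((A + real n + 2) * (A + real n + 3))) * (x ^ n / fact n)) sums
    (p / pochhammer A 2 * exp (- x) * hyp1F1 A (A + 2) x
     + 1 / (A + 2) * (B / (A + 1) - m / (A + 1 + x)) * exp (- x) * hyp1F1 (A + 1) (A + 3) x
     + m / (x * (A + 1 + x)) * (1 - exp (- x) * hyp1F1 (A + 1) (A + 3) x))"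
proof -
  define F0 where "F0 = hyp1F1 A (A + 2) x"
  define F1 where "F1 = hyp1F1 (A + 1) (A + 3) x"
  have s0: "(\<lambda>n. 1 / ((A + real n) * (A + real n + 1)) * (x ^ n / fact n)) sums (F0 / (A * (A + 1)))"
    unfolding F0_def by (rule hyp_sums) (use A x in auto)
  have e3: "A + 1 + 2 = A + 3" "A + 1 + 1 = A + 2" by simp_all
  have s1: "(\<lambda>n. 1 / ((A + real n + 1) * (A + real n + 2)) * (x ^ n / fact n)) sums (F1 / ((A + 1) * (A + 2)))"
  proof -
    have "(\<lambda>n. 1 / ((A + 1 + real n) * (A + 1 + real n + 1)) * (x ^ n / fact n)) sums
        (hyp1F1 (A + 1) (A + 1 + 2) x / ((A + 1) * (A + 1 + 1)))"
      by (rule hyp_sums) (use A x in auto)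
    moreover have "(\<lambda>n. 1 / ((A + 1 + real n) * (A + 1 + real n + 1)) * (x ^ n / fact n))
       = (\<lambda>n. 1 / ((A + real n + 1) * (A + real n + 2)) * (x ^ n / fact n))"
      by (rule ext) (simp add: algebra_simps)
    ultimately show ?thesis unfolding e3 F1_def by simp
  qed
  have s2: "(\<lambda>n. 1 / ((A + real n + 2) * (A + real n + 3)) * (x ^ n / fact n)) sums
      ((exp x - F1 - x * F1 / (A + 2)) / (x * (A + 1 + x)))"
  proof -
    have "(\<lambda>n. 1 / ((A + 1 + real n + 1) * (A + 1 + real n + 2)) * (x ^ n / fact n)) sums
        ((exp x - hyp1F1 (A + 1) (A + 1 + 2) x - x * hyp1F1 (A + 1) (A + 1 + 2) x / (A + 1 + 1)) / (x * (A + 1 + x)))"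
      by (rule contig) (use A x in auto)
    moreover have "(\<lambda>n. 1 / ((A + 1 + real n + 1) * (A + 1 + real n + 2)) * (x ^ n / fact n))
       = (\<lambda>n. 1 / ((A + real n + 2) * (A + real n + 3)) * (x ^ n / fact n))"
      by (rule ext) (simp add: algebra_simps)
    ultimately show ?thesis unfolding e3 F1_def by simp
  qed
  have "(\<lambda>n. exp (-x) * p * (1 / ((A + real n) * (A + real n + 1)) * (x ^ n / fact n))
          + exp (-x) * B * (1 / ((A + real n + 1) * (A + real n + 2)) * (x ^ n / fact n))
          + exp (-x) * m * (1 / ((A + real n + 2) * (A + real n + 3)) * (x ^ n / fact n))) sums
        (exp (-x) * p * (F0 / (A * (A + 1))) + exp (-x) * B * (F1 / ((A + 1) * (A + 2)))
          + exp (-x) * m * ((exp x - F1 - x * F1 / (A + 2)) / (x * (A + 1 + x))))"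
    by (intro sums_add sums_mult s0 s1 s2)
  moreover have "(\<lambda>n. exp (-x) * p * (1 / ((A + real n) * (A + real n + 1)) * (x ^ n / fact n))
          + exp (-x) * B * (1 / ((A + real n + 1) * (A + real n + 2)) * (x ^ n / fact n))
          + exp (-x) * m * (1 / ((A + real n + 2) * (A + real n + 3)) * (x ^ n / fact n)))
    = (\<lambda>n. exp (-x) * (p / ((A + real n) * (A + real n + 1)) + B / ((A + real n + 1) * (A + real n + 2))
            + m / ((A + real n + 2) * (A + real n + 3))) * (x ^ n / fact n))"
    by (rule ext) (simp add: algebra_simps)
  moreover have "exp (-x) * p * (F0 / (A * (A + 1))) + exp (-x) * B * (F1 / ((A + 1) * (A + 2)))
          + exp (-x) * m * ((exp x - F1 - x * F1 / (A + 2)) / (x * (A + 1 + x)))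
     = p / (A * (A + 1)) * exp (-x) * F0
     + 1 / (A + 2) * (B / (A + 1) - m / (A + 1 + x)) * exp (-x) * F1
     + m / (x * (A + 1 + x)) * (1 - exp (-x) * F1)"
    by (rule val_alg) (use A x in \<open>auto simp: exp_minus\<close>)
  moreover have "pochhammer A 2 = A * (A + 1)" by (simp add: numeral_2_eq_2 pochhammer_Suc)
  ultimately show ?thesis unfolding F0_def F1_def by simp
qed


definition ncC0 :: "real \<Rightarrow> real \<Rightarrow> real \<Rightarrow> real" where
  "ncC0 a l t = exp (- l / 2) * (1 + 2*t) powr (-a) * exp (l / 2 / (1 + 2*t))"
definition ncC1 :: "real \<Rightarrow> real \<Rightarrow> real \<Rightarrow> real" where
  "ncC1 a l t = 2 * exp (- l / 2) * (1 + 2*t) powr (-(a + 1)) * ((a + l / 2 / (1 + 2*t)) * exp (l / 2 / (1 + 2*t)))"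

lemma ncC0_nonneg: "0 \<le> ncC0 a l t" unfolding ncC0_def by simp
lemma ncC1_nonneg: "a \<ge> 0 \<Longrightarrow> l \<ge> 0 \<Longrightarrow> t \<ge> 0 \<Longrightarrow> 0 \<le> ncC1 a l t"
  unfolding ncC1_def by (intro mult_nonneg_nonneg) auto

lemma sets_ncchi2[measurable_cong]: "sets (ncchi2 a l) = sets borel"
  by (simp add: ncchi2_def)

lemma nc_meas_all[measurable]: "(\<lambda>y. ennreal (ncchi2_density a l y)) \<in> borel_measurable borel"
  unfolding ncchi2_density_def by measurable

lemma nc_int0:
  assumes a: "a > 0" and l: "l \<ge> 0" and t: "t \<ge> 0"
  shows "(\<integral>\<^sup>+u. ennreal (exp (-(t*u))) \<partial>ncchi2 a l) = ennreal (ncC0 a l t)"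
proof -
  have "(\<integral>\<^sup>+u. ennreal (exp (-(t*u))) \<partial>ncchi2 a l)
      = (\<integral>\<^sup>+u. ennreal (ncchi2_density a l u) * ennreal (exp (-(t*u))) \<partial>lborel)"
    unfolding ncchi2_def by (rule nn_integral_density) auto
  also have "\<dots> = (\<integral>\<^sup>+u. ennreal (ncchi2_density a l u * exp (-(t*u))) \<partial>lborel)"
    using ncchi2_density_nonneg[OF a l] by (intro nn_integral_cong) (simp add: ennreal_mult')
  also have "\<dots> = ennreal (ncC0 a l t)" unfolding ncC0_def by (rule nc_mom0[OF a l t])
  finally show ?thesis .
qed

lemma nc_int1:
  assumes a: "a > 0" and l: "l \<ge> 0" and t: "t \<ge> 0"
  shows "(\<integral>\<^sup>+u. ennreal (u * exp (-(t*u))) \<partial>ncchi2 a l) = ennreal (ncC1 a l t)"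
proof -
  have "(\<integral>\<^sup>+u. ennreal (u * exp (-(t*u))) \<partial>ncchi2 a l)
      = (\<integral>\<^sup>+u. ennreal (ncchi2_density a l u) * ennreal (u * exp (-(t*u))) \<partial>lborel)"
    unfolding ncchi2_def by (rule nn_integral_density) auto
  also have "\<dots> = (\<integral>\<^sup>+u. ennreal (ncchi2_density a l u * (u * exp (-(t*u)))) \<partial>lborel)"
    using ncchi2_density_nonneg[OF a l] by (intro nn_integral_cong) (simp add: ennreal_mult')
  also have "\<dots> = ennreal (ncC1 a l t)" unfolding ncC1_def by (rule nc_mom1[OF a l t])
  finally show ?thesis .
qed

lemma beta2:
  fixes d :: real assumes d: "d > 0"
  shows "(\<integral>\<^sup>+t. ennreal (t * (1 + 2*t) powr (-(d + 2))) * indicator {0..} t \<partial>lborel)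
       = ennreal (1 / (4 * (d * (d + 1))))"
proof -
  have "(\<integral>\<^sup>+t. ennreal (t * (1 + 2*t) powr (-(d + 2))) * indicator {0..} t \<partial>lborel)
     = ennreal (1 / (4 * (d + 2 - 1) * (d + 2 - 2)))"
    by (rule beta_like) (use d in simp)
  also have "4 * (d + 2 - 1) * (d + 2 - 2) = 4 * (d * (d + 1))" by (simp add: algebra_simps)
  finally show ?thesis .
qed

lemma t_series:
  fixes a1 a2 a3 l1 l2 l3 t :: real
  assumes t: "t \<ge> 0"
  defines "w \<equiv> 1 + 2*t"
  shows "(\<lambda>n. 4 * exp (- ((l1 + l2 + l3) / 2)) * t * w powr (-((a1 + a2 + a3) + 2))
            * (a1 * a2 + (a1 * (l2/2) + a2 * (l1/2)) * inverse w + (l1/2) * (l2/2) * inverse w ^ 2)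
            * (((l1 + l2 + l3) / 2 * inverse w) ^ n / fact n))
        sums (t * ncC1 a1 l1 t * ncC1 a2 l2 t * ncC0 a3 l3 t)"
proof -
  have w: "w > 0" using t unfolding w_def by simp
  let ?x = "(l1 + l2 + l3) / 2"
  have s: "(\<lambda>n. 4 * exp (- ?x) * t * w powr (-((a1 + a2 + a3) + 2))
            * (a1 * a2 + (a1 * (l2/2) + a2 * (l1/2)) * inverse w + (l1/2) * (l2/2) * inverse w ^ 2)
            * ((?x * inverse w) ^ n / fact n))
        sums (4 * exp (- ?x) * t * w powr (-((a1 + a2 + a3) + 2))
            * (a1 * a2 + (a1 * (l2/2) + a2 * (l1/2)) * inverse w + (l1/2) * (l2/2) * inverse w ^ 2)
            * exp (?x * inverse w))"
    by (rule sums_mult[OF exp_sums_real'])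
  have pw: "w powr (-(a1 + 1)) * w powr (-(a2 + 1)) * w powr (-a3) = w powr (-((a1 + a2 + a3) + 2))"
  proof -
    have "w powr (-(a1 + 1)) * w powr (-(a2 + 1)) * w powr (-a3) = w powr (-(a1 + 1) + -(a2 + 1) + -a3)"
      by (simp only: powr_add)
    also have "-(a1 + 1) + -(a2 + 1) + -a3 = -((a1 + a2 + a3) + 2)" by simp
    finally show ?thesis .
  qed
  have ex1: "exp (- l1 / 2) * exp (- l2 / 2) * exp (- l3 / 2) = exp (- ?x)"
  proof -
    have "exp (- l1 / 2) * exp (- l2 / 2) * exp (- l3 / 2) = exp (- l1 / 2 + - l2 / 2 + - l3 / 2)"
      by (simp only: exp_add)
    also have "- l1 / 2 + - l2 / 2 + - l3 / 2 = - ?x" by (simp add: field_simps)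
    finally show ?thesis .
  qed
  have ex2: "exp (l1 / 2 / w) * exp (l2 / 2 / w) * exp (l3 / 2 / w) = exp (?x * inverse w)"
  proof -
    have "exp (l1 / 2 / w) * exp (l2 / 2 / w) * exp (l3 / 2 / w) = exp (l1 / 2 / w + l2 / 2 / w + l3 / 2 / w)"
      by (simp only: exp_add)
    also have "l1 / 2 / w + l2 / 2 / w + l3 / 2 / w = (l1 / 2 + l2 / 2 + l3 / 2) / w"
      by (simp only: add_divide_distrib)
    also have "l1 / 2 + l2 / 2 + l3 / 2 = ?x" by simp
    also have "?x / w = ?x * inverse w" by (rule divide_inverse)
    finally show ?thesis .
  qed
  have poly: "(a1 + l1 / 2 / w) * (a2 + l2 / 2 / w)
     = a1 * a2 + (a1 * (l2/2) + a2 * (l1/2)) * inverse w + (l1/2) * (l2/2) * inverse w ^ 2"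
  proof -
    have g: "(a1 + L1 * v) * (a2 + L2 * v) = a1 * a2 + (a1 * L2 + a2 * L1) * v + L1 * L2 * v ^ 2"
      for L1 L2 v :: real by (simp add: algebra_simps power2_eq_square)
    show ?thesis unfolding divide_inverse[of "l1 / 2" w] divide_inverse[of "l2 / 2" w] by (rule g)
  qed
  have re: "t * (2 * E1 * W1 * (Q1 * X1)) * (2 * E2 * W2 * (Q2 * X2)) * (E3 * W3 * X3)
      = 4 * (E1 * E2 * E3) * t * (W1 * W2 * W3) * (Q1 * Q2) * (X1 * X2 * X3)"
    for E1 E2 E3 W1 W2 W3 Q1 Q2 X1 X2 X3 :: real
    by (simp add: mult_ac)
  have eq: "t * ncC1 a1 l1 t * ncC1 a2 l2 t * ncC0 a3 l3 t
     = 4 * exp (- ?x) * t * w powr (-((a1 + a2 + a3) + 2))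
            * (a1 * a2 + (a1 * (l2/2) + a2 * (l1/2)) * inverse w + (l1/2) * (l2/2) * inverse w ^ 2)
            * exp (?x * inverse w)"
    unfolding ncC1_def ncC0_def w_def[symmetric] re pw ex1 ex2 poly ..
  show ?thesis unfolding eq by (rule s)
qed


lemma galg:
  fixes e t W p B m v x F :: real and n :: nat
  shows "4 * e * t * W * (p + B * v + m * v ^ 2) * ((x * v) ^ n / F)
    = (4 * e * x ^ n / F) * (p * (t * (W * v ^ n)) + B * (t * (W * v ^ Suc n)) + m * (t * (W * v ^ Suc (Suc n))))"
  by (simp add: power_mult_distrib algebra_simps power2_eq_square)

lemma enn3:
  fixes K p B m c0 c1 c2 :: real
  assumes "0 \<le> K" "0 \<le> p" "0 \<le> B" "0 \<le> m" "0 \<le> c0" "0 \<le> c1" "0 \<le> c2"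
  shows "ennreal K * (ennreal p * ennreal c0 + ennreal B * ennreal c1 + ennreal m * ennreal c2)
       = ennreal (K * (p * c0 + B * c1 + m * c2))"
proof -
  have "ennreal (K * (p * c0 + B * c1 + m * c2)) = ennreal K * ennreal (p * c0 + B * c1 + m * c2)"
    using assms by (intro ennreal_mult) auto
  also have "ennreal (p * c0 + B * c1 + m * c2) = ennreal (p * c0 + B * c1) + ennreal (m * c2)"
    using assms by (intro ennreal_plus) auto
  also have "ennreal (p * c0 + B * c1) = ennreal (p * c0) + ennreal (B * c1)"
    using assms by (intro ennreal_plus) auto
  also have "ennreal (p * c0) = ennreal p * ennreal c0" using assms by (intro ennreal_mult) auto
  also have "ennreal (B * c1) = ennreal B * ennreal c1" using assms by (intro ennreal_mult) auto
  also have "ennreal (m * c2) = ennreal m * ennreal c2" using assms by (intro ennreal_mult) auto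
  finally show ?thesis ..
qed

lemma powr_shift:
  fixes w A :: real and n k :: nat
  assumes "w > 0"
  shows "w powr (-((A + real n + real k) + 2)) = w powr (-(A + 2)) * inverse w ^ (n + k)"
proof -
  have "w powr (-((A + real n + real k) + 2)) = w powr (-((A + 2) + real (n + k)))"
    by (rule arg_cong[where f="\<lambda>e. w powr e"]) simp
  also have "\<dots> = w powr (-(A + 2)) * inverse w ^ (n + k)" by (rule powr_split[OF assms])
  finally show ?thesis .
qed

lemma tint_term:
  fixes A x p B m :: real and n :: nat
  assumes A: "A > 0" and x: "x \<ge> 0" and p: "p \<ge> 0" and B: "B \<ge> 0" and m: "m \<ge> 0"
  shows "(\<integral>\<^sup>+t. ennreal (4 * exp (- x) * t * (1 + 2*t) powr (-(A + 2))
            * (p + B * inverse (1 + 2*t) + m * inverse (1 + 2*t) ^ 2)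
            * ((x * inverse (1 + 2*t)) ^ n / fact n)) * indicator {0..} t \<partial>lborel)
      = ennreal (exp (- x) * (p / ((A + real n) * (A + real n + 1)) + B / ((A + real n + 1) * (A + real n + 2))
            + m / ((A + real n + 2) * (A + real n + 3))) * (x ^ n / fact n))"
proof -
  define K where "K = 4 * exp (- x) * x ^ n / fact n"
  have K: "K \<ge> 0" unfolding K_def using x by simp
  define f where "f = (\<lambda>(k::nat) (t::real). t * (1 + 2*t) powr (-((A + real n + real k) + 2)))"
  have fnn: "t \<ge> 0 \<Longrightarrow> 0 \<le> f k t" for k t unfolding f_def by simp
  have pt: "ennreal (4 * exp (- x) * t * (1 + 2*t) powr (-(A + 2))
            * (p + B * inverse (1 + 2*t) + m * inverse (1 + 2*t) ^ 2)
            * ((x * inverse (1 + 2*t)) ^ n / fact n)) * indicator {0..} t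
      = ennreal K * (ennreal p * (ennreal (f 0 t) * indicator {0..} t)
          + ennreal B * (ennreal (f 1 t) * indicator {0..} t)
          + ennreal m * (ennreal (f 2 t) * indicator {0..} t))" for t
  proof (cases "t \<ge> 0")
    case False then show ?thesis by simp
  next
    case True
    have w: "1 + 2*t > 0" using True by simp
    have e: "4 * exp (- x) * t * (1 + 2*t) powr (-(A + 2))
            * (p + B * inverse (1 + 2*t) + m * inverse (1 + 2*t) ^ 2)
            * ((x * inverse (1 + 2*t)) ^ n / fact n)
        = K * (p * f 0 t + B * f 1 t + m * f 2 t)"
      unfolding galg K_def f_def
      using powr_shift[OF w, of A n 0] powr_shift[OF w, of A n 1] powr_shift[OF w, of A n 2]
      by (simp add: numeral_2_eq_2)
    have nn: "0 \<le> f 0 t" "0 \<le> f 1 t" "0 \<le> f 2 t" using fnn True by auto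
    have ind: "indicator {0..} t = (1::ennreal)" using True by simp
    show ?thesis unfolding e ind mult_1_right by (rule enn3[symmetric, OF K p B m nn])
  qed
  have I: "(\<integral>\<^sup>+t. ennreal (f k t) * indicator {0..} t \<partial>lborel) = ennreal (1 / (4 * ((A + real n + real k) * (A + real n + real k + 1))))" for k
    unfolding f_def by (rule beta2) (use A in simp)
  have meas: "(\<lambda>t. ennreal (f k t) * indicator {0..} t) \<in> borel_measurable borel" for k
    unfolding f_def by measurable
  have "(\<integral>\<^sup>+t. ennreal (4 * exp (- x) * t * (1 + 2*t) powr (-(A + 2))
            * (p + B * inverse (1 + 2*t) + m * inverse (1 + 2*t) ^ 2)
            * ((x * inverse (1 + 2*t)) ^ n / fact n)) * indicator {0..} t \<partial>lborel)
     = ennreal K * (ennreal p * (\<integral>\<^sup>+t. ennreal (f 0 t) * indicator {0..} t \<partial>lborel)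
          + ennreal B * (\<integral>\<^sup>+t. ennreal (f 1 t) * indicator {0..} t \<partial>lborel)
          + ennreal m * (\<integral>\<^sup>+t. ennreal (f 2 t) * indicator {0..} t \<partial>lborel))"
    unfolding pt using meas
    by (simp add: nn_integral_cmult nn_integral_add)
  also have "\<dots> = ennreal (K * (p * (1 / (4 * ((A + real n) * (A + real n + 1))))
        + B * (1 / (4 * ((A + real n + 1) * (A + real n + 1 + 1))))
        + m * (1 / (4 * ((A + real n + 2) * (A + real n + 2 + 1))))))"
  proof -
    have I0: "(\<integral>\<^sup>+t. ennreal (f 0 t) * indicator {0..} t \<partial>lborel) = ennreal (1 / (4 * ((A + real n) * (A + real n + 1))))"
      using I[of 0] by simp
    have I1: "(\<integral>\<^sup>+t. ennreal (f 1 t) * indicator {0..} t \<partial>lborel) = ennreal (1 / (4 * ((A + real n + 1) * (A + real n + 1 + 1))))"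
      using I[of 1] by simp
    have I2: "(\<integral>\<^sup>+t. ennreal (f 2 t) * indicator {0..} t \<partial>lborel) = ennreal (1 / (4 * ((A + real n + 2) * (A + real n + 2 + 1))))"
      using I[of 2] by simp
    show ?thesis unfolding I0 I1 I2
      by (rule enn3[OF K p B m]) (use A in \<open>auto intro!: divide_nonneg_nonneg mult_nonneg_nonneg add_nonneg_nonneg\<close>)
  qed
  also have "K * (p * (1 / (4 * ((A + real n) * (A + real n + 1))))
        + B * (1 / (4 * ((A + real n + 1) * (A + real n + 1 + 1))))
        + m * (1 / (4 * ((A + real n + 2) * (A + real n + 2 + 1)))))
    = exp (- x) * (p / ((A + real n) * (A + real n + 1)) + B / ((A + real n + 1) * (A + real n + 2))
            + m / ((A + real n + 2) * (A + real n + 3))) * (x ^ n / fact n)"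
  proof -
    have r: "A + real n + 1 + 1 = A + real n + 2" "A + real n + 2 + 1 = A + real n + 3" by simp_all
    have g: "(4 * E * X / F) * (p * (1 / (4 * D0)) + B * (1 / (4 * D1)) + m * (1 / (4 * D2)))
        = E * (p / D0 + B / D1 + m / D2) * (X / F)" for E X F D0 D1 D2 :: real
    proof -
      have q: "1 / (4 * D) = (1/4) * (1 / D)" for D :: real by simp
      show ?thesis unfolding q by (simp add: algebra_simps)
    qed
    show ?thesis unfolding r K_def by (rule g)
  qed
  finally show ?thesis .
qed


lemma tint:
  fixes a1 a2 a3 l1 l2 l3 :: real
  assumes a1: "a1 > 0" and a2: "a2 > 0" and a3: "a3 > 0"
    and l1: "l1 \<ge> 0" and l2: "l2 \<ge> 0" and l3: "l3 \<ge> 0" and lp: "l1 + l2 + l3 > 0"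
  defines "A \<equiv> a1 + a2 + a3" and "x \<equiv> (l1 + l2 + l3) / 2"
    and "p \<equiv> a1 * a2" and "B \<equiv> a1 * (l2/2) + a2 * (l1/2)" and "m \<equiv> (l1/2) * (l2/2)"
  shows "(\<integral>\<^sup>+t. ennreal t * indicator {0..} t * (ennreal (ncC1 a1 l1 t) * ennreal (ncC1 a2 l2 t) * ennreal (ncC0 a3 l3 t)) \<partial>lborel)
     = ennreal (p / pochhammer A 2 * exp (- x) * hyp1F1 A (A + 2) x
     + 1 / (A + 2) * (B / (A + 1) - m / (A + 1 + x)) * exp (- x) * hyp1F1 (A + 1) (A + 3) x
     + m / (x * (A + 1 + x)) * (1 - exp (- x) * hyp1F1 (A + 1) (A + 3) x))"
proof -
  have A: "A > 0" unfolding A_def using a1 a2 a3 by simp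
  have x: "x > 0" unfolding x_def using lp by simp
  have p: "p \<ge> 0" unfolding p_def using a1 a2 by simp
  have B: "B \<ge> 0" unfolding B_def using a1 a2 l1 l2 by simp
  have m: "m \<ge> 0" unfolding m_def using l1 l2 by simp
  define T where "T = (\<lambda>n t. 4 * exp (- x) * t * (1 + 2*t) powr (-(A + 2))
            * (p + B * inverse (1 + 2*t) + m * inverse (1 + 2*t) ^ 2)
            * ((x * inverse (1 + 2*t)) ^ n / fact n))"
  have Tnn: "t \<ge> 0 \<Longrightarrow> 0 \<le> T n t" for n t
    unfolding T_def using p B m x
    by (intro mult_nonneg_nonneg add_nonneg_nonneg divide_nonneg_nonneg zero_le_power) auto
  have pt: "ennreal t * indicator {0..} t * (ennreal (ncC1 a1 l1 t) * ennreal (ncC1 a2 l2 t) * ennreal (ncC0 a3 l3 t))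
      = (\<Sum>n. ennreal (T n t) * indicator {0..} t)" for t
  proof (cases "t \<ge> 0")
    case False then show ?thesis by simp
  next
    case True
    have ts: "(\<lambda>n. T n t) sums (t * ncC1 a1 l1 t * ncC1 a2 l2 t * ncC0 a3 l3 t)"
      using t_series[OF True, of l1 l2 l3 a1 a2 a3]
      unfolding T_def A_def x_def p_def B_def m_def by simp
    have "(\<Sum>n. ennreal (T n t)) = ennreal (t * ncC1 a1 l1 t * ncC1 a2 l2 t * ncC0 a3 l3 t)"
      by (rule ennreal_sums[OF Tnn[OF True] ts])
    moreover have "ennreal t * (ennreal (ncC1 a1 l1 t) * ennreal (ncC1 a2 l2 t) * ennreal (ncC0 a3 l3 t))
        = ennreal (t * ncC1 a1 l1 t * ncC1 a2 l2 t * ncC0 a3 l3 t)"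
      using True ncC1_nonneg[of a1 l1 t] ncC1_nonneg[of a2 l2 t] ncC0_nonneg[of a3 l3 t] a1 a2 l1 l2
      by (simp add: ennreal_mult mult.assoc)
    ultimately show ?thesis using True by simp
  qed
  have "(\<integral>\<^sup>+t. ennreal t * indicator {0..} t * (ennreal (ncC1 a1 l1 t) * ennreal (ncC1 a2 l2 t) * ennreal (ncC0 a3 l3 t)) \<partial>lborel)
      = (\<Sum>n. \<integral>\<^sup>+t. ennreal (T n t) * indicator {0..} t \<partial>lborel)"
    unfolding pt by (rule nn_integral_suminf) (simp add: T_def)
  also have "\<dots> = (\<Sum>n. ennreal (exp (- x) * (p / ((A + real n) * (A + real n + 1)) + B / ((A + real n + 1) * (A + real n + 2))
            + m / ((A + real n + 2) * (A + real n + 3))) * (x ^ n / fact n)))"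
    unfolding T_def using A x p B m by (subst tint_term) auto
  also have "\<dots> = ennreal (p / pochhammer A 2 * exp (- x) * hyp1F1 A (A + 2) x
     + 1 / (A + 2) * (B / (A + 1) - m / (A + 1 + x)) * exp (- x) * hyp1F1 (A + 1) (A + 3) x
     + m / (x * (A + 1 + x)) * (1 - exp (- x) * hyp1F1 (A + 1) (A + 3) x))"
  proof (rule ennreal_sums)
    show "0 \<le> exp (- x) * (p / ((A + real n) * (A + real n + 1)) + B / ((A + real n + 1) * (A + real n + 2))
            + m / ((A + real n + 2) * (A + real n + 3))) * (x ^ n / fact n)" for n
      using A x p B m by (intro mult_nonneg_nonneg add_nonneg_nonneg divide_nonneg_nonneg) auto
  qed (rule series_main[OF A x])
  finally show ?thesis .
qed


lemma sf_ncchi2: "sigma_finite_measure (ncchi2 a l)"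
  unfolding ncchi2_def by (subst sigma_finite_measure.sigma_finite_iff_density_finite[OF sigma_finite_lborel]) auto

lemma nc_pos: "AE u in ncchi2 a l. u > 0"
  unfolding ncchi2_def
proof (subst AE_density)
  show "AE u in lborel. 0 < ennreal (ncchi2_density a l u) \<longrightarrow> 0 < u"
  proof (rule AE_I2, rule impI, rule ccontr)
    fix u :: real assume "0 < ennreal (ncchi2_density a l u)" "\<not> 0 < u"
    then show False by (simp add: ncchi2_density_def chi2_density_def)
  qed
qed simp

lemma enn_prod:
  fixes a b c d :: real
  assumes "0 \<le> a" "0 \<le> b" "0 \<le> c" "0 \<le> d"
  shows "ennreal a * (ennreal b * ennreal c * ennreal d) = ennreal (a * (b * c * d))"
  using assms by (simp add: ennreal_mult mult_nonneg_nonneg)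

lemma enn_prod2:
  fixes a b :: real
  assumes "0 \<le> a" "0 \<le> b"
  shows "ennreal a * ennreal b = ennreal (a * b)"
  using assms by (simp add: ennreal_mult)


theorem mainTheorem5:
  fixes a1 a2 a3 l1 l2 l3 :: real
  assumes "a1 > 0" "a2 > 0" "a3 > 0"
    and "l1 \<ge> 0" "l2 \<ge> 0" "l3 \<ge> 0"
    and "l1 + l2 + l3 > 0"
  shows "(let ap = a1 + a2 + a3; x = (l1 + l2 + l3) / 2; m1 = l1 / 2; m2 = l2 / 2 in
          (\<integral>p. fst p * snd p \<partial>NcDir2 a1 a2 a3 l1 l2 l3) =
            a1 * a2 / pochhammer ap 2 * exp (- x) * hyp1F1 ap (ap + 2) x
          + 1 / (ap + 2) * ((a1 * m2 + a2 * m1) / (ap + 1) - m1 * m2 / (ap + 1 + x))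
              * exp (- x) * hyp1F1 (ap + 1) (ap + 3) x
          + m1 * m2 / (x * (ap + 1 + x)) * (1 - exp (- x) * hyp1F1 (ap + 1) (ap + 3) x))"
proof -
  note a1 = \<open>a1 > 0\<close> and a2 = \<open>a2 > 0\<close> and a3 = \<open>a3 > 0\<close>
  note l1 = \<open>l1 \<ge> 0\<close> and l2 = \<open>l2 \<ge> 0\<close> and l3 = \<open>l3 \<ge> 0\<close> and lp = \<open>l1 + l2 + l3 > 0\<close>
  define M where "M = (\<lambda>i::nat. ncchi2 ([a1, a2, a3] ! i) ([l1, l2, l3] ! i))"
  define RHS where "RHS = a1 * a2 / pochhammer (a1 + a2 + a3) 2 * exp (- ((l1 + l2 + l3) / 2)) * hyp1F1 (a1 + a2 + a3) (a1 + a2 + a3 + 2) ((l1 + l2 + l3) / 2)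
     + 1 / (a1 + a2 + a3 + 2) * ((a1 * (l2 / 2) + a2 * (l1 / 2)) / (a1 + a2 + a3 + 1) - l1 / 2 * (l2 / 2) / (a1 + a2 + a3 + 1 + (l1 + l2 + l3) / 2))
        * exp (- ((l1 + l2 + l3) / 2)) * hyp1F1 (a1 + a2 + a3 + 1) (a1 + a2 + a3 + 3) ((l1 + l2 + l3) / 2)
     + l1 / 2 * (l2 / 2) / ((l1 + l2 + l3) / 2 * (a1 + a2 + a3 + 1 + (l1 + l2 + l3) / 2))
        * (1 - exp (- ((l1 + l2 + l3) / 2)) * hyp1F1 (a1 + a2 + a3 + 1) (a1 + a2 + a3 + 3) ((l1 + l2 + l3) / 2))"
  have M0: "M 0 = ncchi2 a1 l1" "M 1 = ncchi2 a2 l2" "M 2 = ncchi2 a3 l3" "M (Suc 0) = ncchi2 a2 l2" by (simp_all add: M_def)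
  have sets_M[measurable_cong]: "sets (M i) = sets borel" for i by (simp add: M_def sets_ncchi2)
  interpret product_sigma_finite M
    by (intro product_sigma_finite.intro) (simp add: M_def sf_ncchi2)
  interpret F: finite_product_sigma_finite M "{0::nat, 1, 2}" by standard simp
  interpret PS: pair_sigma_finite lborel "Pi\<^sub>M {0::nat, 1, 2} M"
    by (intro pair_sigma_finite.intro sigma_finite_lborel F.sigma_finite_measure_axioms)
  have prob: "i \<in> {0::nat, 1, 2} \<Longrightarrow> prob_space (M i)" for i
    using ncchi2_prob[OF a1 l1] ncchi2_prob[OF a2 l2] ncchi2_prob[OF a3 l3] M0 by auto
  have aeP: "AE y in Pi\<^sub>M {0::nat, 1, 2} M. y i > 0" if i: "i \<in> {0::nat, 1, 2}" for i
  proof (rule AE_PiM_component[OF prob i])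
    show "AE u in M i. u > 0" unfolding M_def by (rule nc_pos)
  qed
  have ae_pos: "AE y in Pi\<^sub>M {0::nat, 1, 2} M. y 0 > 0 \<and> y 1 > 0 \<and> y 2 > 0"
  proof -
    have "AE y in Pi\<^sub>M {0::nat, 1, 2} M. y 0 > 0" by (rule aeP) simp
    moreover have "AE y in Pi\<^sub>M {0::nat, 1, 2} M. y 1 > 0" by (rule aeP) simp
    moreover have "AE y in Pi\<^sub>M {0::nat, 1, 2} M. y 2 > 0" by (rule aeP) simp
    ultimately show ?thesis by eventually_elim auto
  qed
  let ?P = "Pi\<^sub>M {0::nat, 1, 2} M"
  let ?h = "\<lambda>y::nat \<Rightarrow> real. y 0 / (y 0 + y 1 + y 2) * (y 1 / (y 0 + y 1 + y 2))"
  define G where "G = (\<lambda>(t::real) (y::nat \<Rightarrow> real). ennreal t * indicator {0..} t *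
      (ennreal (y 0 * exp (-(t * y 0))) * ennreal (y 1 * exp (-(t * y 1))) * ennreal (exp (-(t * y 2)))))"
  have eqNc: "NcDir2 a1 a2 a3 l1 l2 l3 = distr ?P borel (\<lambda>y. (y 0 / (y 0 + y 1 + y 2), y 1 / (y 0 + y 1 + y 2)))"
    by (simp add: NcDir2_def M_def)
  have int1: "(\<integral>p. fst p * snd p \<partial>NcDir2 a1 a2 a3 l1 l2 l3) = (\<integral>y. ?h y \<partial>?P)"
  proof -
    have fm: "(\<lambda>p::real \<times> real. fst p * snd p) \<in> borel_measurable borel"
      by (intro borel_measurable_continuous_onI continuous_intros)
    show ?thesis unfolding eqNc by (subst integral_distr[OF _ fm]) (auto simp: measurable)
  qed
  have int2: "(\<integral>y. ?h y \<partial>?P) = enn2real (\<integral>\<^sup>+y. ennreal (?h y) \<partial>?P)"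
    by (rule integral_eq_nn_integral) (measurable, use ae_pos in \<open>eventually_elim, auto\<close>)
  have lap: "AE y in ?P. ennreal (?h y) = (\<integral>\<^sup>+t. G t y \<partial>lborel)"
    using ae_pos
  proof eventually_elim
    case (elim y)
    define S where "S = y 0 + y 1 + y 2"
    have S: "S > 0" unfolding S_def using elim by simp
    have pt: "G t y = ennreal (y 0 * y 1) * (ennreal (t * exp (-(t*S))) * indicator {0..} t)" for t
    proof (cases "t \<ge> 0")
      case False then show ?thesis by (simp add: G_def)
    next
      case True
      have ex: "exp (-(t*S)) = exp (-(t * y 0)) * exp (-(t * y 1)) * exp (-(t * y 2))"
        unfolding S_def by (simp add: exp_add[symmetric] algebra_simps)
      have "G t y = ennreal (t * ((y 0 * exp (-(t * y 0))) * (y 1 * exp (-(t * y 1))) * exp (-(t * y 2))))"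
        unfolding G_def using True elim by (simp add: enn_prod)
      also have "\<dots> = ennreal (y 0 * y 1 * (t * exp (-(t*S))))"
        unfolding ex by (simp add: mult_ac)
      also have "\<dots> = ennreal (y 0 * y 1) * (ennreal (t * exp (-(t*S))) * indicator {0..} t)"
        using True elim by (simp add: enn_prod2)
      finally show ?thesis .
    qed
    have "(\<integral>\<^sup>+t. G t y \<partial>lborel) = ennreal (y 0 * y 1) * (\<integral>\<^sup>+t. ennreal (t * exp (-(t*S))) * indicator {0..} t \<partial>lborel)"
      unfolding pt by (rule nn_integral_cmult) measurable
    also have "\<dots> = ennreal (y 0 * y 1) * ennreal (1 / S^2)" by (simp only: laplace_sq[OF S])
    also have "\<dots> = ennreal (?h y)"
    proof -
      have r: "y 0 * y 1 * (1 / S^2) = ?h y" unfolding S_def by (simp add: power2_eq_square)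
      show ?thesis using elim S by (subst enn_prod2) (auto simp: r power2_eq_square S_def)
    qed
    finally show ?case ..
  qed
  have Gm: "case_prod G \<in> borel_measurable (lborel \<Otimes>\<^sub>M ?P)"
    unfolding G_def by measurable
  have fub: "(\<integral>\<^sup>+y. (\<integral>\<^sup>+t. G t y \<partial>lborel) \<partial>?P) = (\<integral>\<^sup>+t. (\<integral>\<^sup>+y. G t y \<partial>?P) \<partial>lborel)"
    by (rule PS.Fubini'[OF Gm])
  have inner: "(\<integral>\<^sup>+y. G t y \<partial>?P) = ennreal t * indicator {0..} t *
        (ennreal (ncC1 a1 l1 t) * ennreal (ncC1 a2 l2 t) * ennreal (ncC0 a3 l3 t))" for t
  proof (cases "t \<ge> 0")
    case False then show ?thesis by (simp add: G_def)
  next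
    case True
    define \<phi> where "\<phi> = (\<lambda>(i::nat) (u::real). ennreal ((if i = 2 then 1 else u) * exp (-(t*u))))"
    have \<phi>m: "\<phi> i \<in> borel_measurable (M i)" for i
      unfolding \<phi>_def measurable_cong_sets[OF sets_M refl] by measurable
    have "(\<integral>\<^sup>+y. G t y \<partial>?P) = ennreal t * indicator {0..} t *
        (\<integral>\<^sup>+y. ennreal (y 0 * exp (-(t * y 0))) * ennreal (y 1 * exp (-(t * y 1))) * ennreal (exp (-(t * y 2))) \<partial>?P)"
    proof -
      have mm: "(\<lambda>y. ennreal (y 0 * exp (-(t * y 0))) * ennreal (y 1 * exp (-(t * y 1))) * ennreal (exp (-(t * y 2))))
          \<in> borel_measurable ?P" by measurable
      show ?thesis unfolding G_def by (simp only: nn_integral_cmult[OF mm] split_beta')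
    qed
    also have "(\<integral>\<^sup>+y. ennreal (y 0 * exp (-(t * y 0))) * ennreal (y 1 * exp (-(t * y 1))) * ennreal (exp (-(t * y 2))) \<partial>?P)
        = (\<integral>\<^sup>+y. (\<Prod>i\<in>{0::nat, 1, 2}. \<phi> i (y i)) \<partial>?P)"
      by (simp add: \<phi>_def mult.assoc)
    also have "\<dots> = (\<Prod>i\<in>{0::nat, 1, 2}. integral\<^sup>N (M i) (\<phi> i))"
      by (rule product_nn_integral_prod) (auto intro: \<phi>m)
    also have "\<dots> = ennreal (ncC1 a1 l1 t) * ennreal (ncC1 a2 l2 t) * ennreal (ncC0 a3 l3 t)"
      using nc_int1[OF a1 l1 True] nc_int1[OF a2 l2 True] nc_int0[OF a3 l3 True]
      by (simp add: \<phi>_def M0 mult.assoc)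
    finally show ?thesis .
  qed
  have nn: "(\<integral>\<^sup>+y. ennreal (?h y) \<partial>?P) = ennreal RHS"
  proof -
    have "(\<integral>\<^sup>+y. ennreal (?h y) \<partial>?P) = (\<integral>\<^sup>+y. (\<integral>\<^sup>+t. G t y \<partial>lborel) \<partial>?P)"
      by (rule nn_integral_cong_AE[OF lap])
    also have "\<dots> = (\<integral>\<^sup>+t. ennreal t * indicator {0..} t *
        (ennreal (ncC1 a1 l1 t) * ennreal (ncC1 a2 l2 t) * ennreal (ncC0 a3 l3 t)) \<partial>lborel)"
      unfolding fub inner ..
    also have "\<dots> = ennreal RHS"
      unfolding RHS_def by (rule tint[OF a1 a2 a3 l1 l2 l3 lp])
    finally show ?thesis .
  qed
  have RHS_nn: "RHS \<ge> 0"
  proof -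
    let ?A = "a1 + a2 + a3" and ?x = "(l1 + l2 + l3) / 2"
    have A: "?A > 0" using a1 a2 a3 by simp
    have x: "?x > 0" using lp by simp
    have s: "(\<lambda>n. exp (- ?x) * (a1 * a2 / ((?A + real n) * (?A + real n + 1)) + (a1 * (l2/2) + a2 * (l1/2)) / ((?A + real n + 1) * (?A + real n + 2))
            + l1 / 2 * (l2 / 2) / ((?A + real n + 2) * (?A + real n + 3))) * (?x ^ n / fact n)) sums RHS"
      unfolding RHS_def by (rule series_main[OF A x])
    show ?thesis
    proof (rule sums_le[OF _ sums_zero s])
      show "0 \<le> exp (- ?x) * (a1 * a2 / ((?A + real n) * (?A + real n + 1)) + (a1 * (l2/2) + a2 * (l1/2)) / ((?A + real n + 1) * (?A + real n + 2))
            + l1 / 2 * (l2 / 2) / ((?A + real n + 2) * (?A + real n + 3))) * (?x ^ n / fact n)" for n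
        using A x a1 a2 a3 l1 l2 by (intro mult_nonneg_nonneg add_nonneg_nonneg divide_nonneg_nonneg) auto
    qed
  qed
  have "(\<integral>p. fst p * snd p \<partial>NcDir2 a1 a2 a3 l1 l2 l3) = RHS"
    unfolding int1 int2 nn using RHS_nn by simp
  then show ?thesis unfolding Let_def RHS_def .
qed


end
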